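(* Let $B\subseteq A$ be a unital inclusion of unital $C^*$-algebras and let $p\in B$ be a projection. If $B\subseteq A$ is $C^*$-irreducible, then so is $pBp\subseteq pAp$. Conversely, if $p$ is full in $B$ and $pBp\subseteq pAp$ is $C^*$-irreducible, then $B\subseteq A$ is $C^*$-irreducible; moreover, in this case the assignment $D\mapsto pDp$ is a bijection from the set of intermediate $C^*$-algebras $B\subseteq D\subseteq A$ onto the set of intermediate $C^*$-algebras $pBp\subseteq C\subseteq pAp$.
   Context: A unital inclusion $B\subseteq A$ of $C^*$-algebras is $C^*$-irreducible if every intermediate $C^*$-algebra $B\subseteq D\subseteq A$ is simple. A projection $p\in B$ is full in $B$ if it is not contained in any proper closed two-sided ideal of $B$. *)

theory Defs
  imports Complex_Main
begin

class cstar_algebra = banach + real_normed_algebra_1 +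
  fixes scaleC :: "complex \<Rightarrow> 'a \<Rightarrow> 'a"
    and cstar :: "'a \<Rightarrow> 'a"
  assumes scaleC_scaleR: "scaleC (complex_of_real r) x = scaleR r x"
    and scaleC_add_right: "scaleC c (x + y) = scaleC c x + scaleC c y"
    and scaleC_add_left: "scaleC (c + d) x = scaleC c x + scaleC d x"
    and scaleC_scaleC: "scaleC c (scaleC d x) = scaleC (c * d) x"
    and scaleC_one: "scaleC 1 x = x"
    and scaleC_mult_left: "scaleC c x * y = scaleC c (x * y)"
    and scaleC_mult_right: "x * scaleC c y = scaleC c (x * y)"
    and norm_scaleC: "norm (scaleC c x) = cmod c * norm x"
    and cstar_cstar: "cstar (cstar x) = x"
    and cstar_add: "cstar (x + y) = cstar x + cstar y"
    and cstar_scaleC: "cstar (scaleC c x) = scaleC (cnj c) (cstar x)"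
    and cstar_mult: "cstar (x * y) = cstar y * cstar x"
    and cstar_identity: "norm (cstar x * x) = (norm x)\<^sup>2"

definition cstar_subalg :: "'a::cstar_algebra set \<Rightarrow> bool" where
  "cstar_subalg S \<longleftrightarrow> 0 \<in> S \<and>
     (\<forall>x\<in>S. \<forall>y\<in>S. x + y \<in> S \<and> x * y \<in> S) \<and>
     (\<forall>c. \<forall>x\<in>S. scaleC c x \<in> S) \<and>
     (\<forall>x\<in>S. cstar x \<in> S) \<and> closed S"

definition closed_ideal :: "'a::cstar_algebra set \<Rightarrow> 'a set \<Rightarrow> bool" where
  "closed_ideal I D \<longleftrightarrow> I \<subseteq> D \<and> 0 \<in> I \<and>
     (\<forall>x\<in>I. \<forall>y\<in>I. x + y \<in> I) \<and>
     (\<forall>c. \<forall>x\<in>I. scaleC c x \<in> I) \<and>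
     (\<forall>d\<in>D. \<forall>x\<in>I. d * x \<in> I \<and> x * d \<in> I) \<and> closed I"

definition simple_cstar :: "'a::cstar_algebra set \<Rightarrow> bool" where
  "simple_cstar D \<longleftrightarrow> D \<noteq> {0} \<and> (\<forall>I. closed_ideal I D \<longrightarrow> I = {0} \<or> I = D)"

definition intermediate :: "'a::cstar_algebra set \<Rightarrow> 'a set \<Rightarrow> 'a set set" where
  "intermediate B A = {D. cstar_subalg D \<and> B \<subseteq> D \<and> D \<subseteq> A}"

definition cstar_irreducible :: "'a::cstar_algebra set \<Rightarrow> 'a set \<Rightarrow> bool" where
  "cstar_irreducible B A \<longleftrightarrow> (\<forall>D \<in> intermediate B A. simple_cstar D)"

definition projection :: "'a::cstar_algebra \<Rightarrow> bool" where
  "projection p \<longleftrightarrow> p * p = p \<and> cstar p = p"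

definition full_in :: "'a::cstar_algebra \<Rightarrow> 'a set \<Rightarrow> bool" where
  "full_in p B \<longleftrightarrow> (\<forall>I. closed_ideal I B \<and> p \<in> I \<longrightarrow> I = B)"

definition corner :: "'a::cstar_algebra \<Rightarrow> 'a set \<Rightarrow> 'a set" where
  "corner p S = {p * x * p | x. x \<in> S}"

end

theory Submission
  imports Defs
begin


lemma sC_zero_right: "scaleC c (0::'a::cstar_algebra) = 0"
proof -
  have "scaleC c (0::'a) = scaleC c 0 + scaleC c 0" by (metis add_0 scaleC_add_right)
  then show ?thesis by simp
qed

lemma sC_minus: "scaleC (-1) (x::'a::cstar_algebra) = - x"
  by (metis of_real_1 of_real_minus scaleC_scaleR scaleR_minus1_left)

lemma cstar_zero: "cstar (0::'a::cstar_algebra) = 0"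
proof -
  have "cstar (0::'a) = cstar 0 + cstar 0" by (metis add_0 cstar_add)
  then show ?thesis by simp
qed

lemma cstar_minus: "cstar (- x::'a::cstar_algebra) = - cstar x"
  by (metis add.right_inverse cstar_add cstar_zero minus_unique)

lemma cstar_scaleR: "cstar (scaleR r x::'a::cstar_algebra) = scaleR r (cstar x)"
  by (metis complex_cnj_complex_of_real cstar_scaleC scaleC_scaleR)

lemma norm_cstar: "norm (cstar (x::'a::cstar_algebra)) = norm x"
proof -
  have le: "norm y \<le> norm (cstar y)" for y :: 'a
  proof (cases "y = 0")
    case True then show ?thesis by (simp add: cstar_zero)
  next
    case False
    have "(norm y)^2 \<le> norm (cstar y) * norm y"
      using cstar_identity[of y] norm_mult_ineq[of "cstar y" y] by simp
    then show ?thesis using False by (simp add: power2_eq_square)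
  qed
  show ?thesis using le[of x] le[of "cstar x"] by (simp add: cstar_cstar)
qed

lemma bl_cstar: "bounded_linear (cstar::'a::cstar_algebra \<Rightarrow> 'a)"
  by (rule bounded_linear_intro[where K=1]) (auto simp: cstar_add cstar_scaleR norm_cstar)

definition csub :: "'a::cstar_algebra set \<Rightarrow> bool" where
  "csub T \<longleftrightarrow> 0 \<in> T \<and> (\<forall>x\<in>T. \<forall>y\<in>T. x + y \<in> T) \<and> (\<forall>c. \<forall>x\<in>T. scaleC c x \<in> T) \<and> closed T"

lemma hull_pre:
  fixes f :: "'a::cstar_algebra \<Rightarrow> 'a"
  assumes T: "csub T" and bl: "bounded_linear f"
    and sc: "\<And>c x. \<exists>c'. f (scaleC c x) = scaleC c' (f x)"
    and S: "\<And>x. x \<in> S \<Longrightarrow> f x \<in> T"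
    and x: "x \<in> csub hull S"
  shows "f x \<in> T"
proof (rule hull_induct[OF x, where P="\<lambda>x. f x \<in> T"])
  show "\<And>x. x \<in> S \<Longrightarrow> f x \<in> T" by (rule S)
  interpret bounded_linear f by (rule bl)
  have "closed (f -` T)"
    using T continuous_on[OF continuous_on_id] unfolding csub_def
    by (intro closed_vimage) auto
  moreover have "{x. f x \<in> T} = f -` T" by auto
  ultimately show "csub {x. f x \<in> T}"
    using T unfolding csub_def by (auto simp: add zero) (metis sc)
qed

lemma csub_hull: "csub (csub hull S)"
  by (rule hull_in) (auto simp: csub_def)

lemma hull_sub: "csub T \<Longrightarrow> S \<subseteq> T \<Longrightarrow> csub hull S \<subseteq> T"
  by (rule hull_minimal)

lemma csub_sub: "cstar_subalg D \<Longrightarrow> csub D"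
  by (auto simp: csub_def cstar_subalg_def)

lemma csub_ideal: "closed_ideal J D \<Longrightarrow> csub J"
  by (auto simp: csub_def closed_ideal_def)

lemma csub_zero: "csub {0::'a::cstar_algebra}"
  by (auto simp: csub_def sC_zero_right)

lemma bl_lr: "bounded_linear (\<lambda>x::'a::cstar_algebra. a * x * b)"
  using bounded_linear_compose[OF bounded_linear_mult_left[of b] bounded_linear_mult_right[of a]] by simp

lemma sc_lr: "\<exists>c'. a * scaleC c x * b = scaleC c' (a * x * b)"
  by (metis scaleC_mult_left scaleC_mult_right)
lemma sc_l: "\<exists>c'. a * scaleC c x = scaleC c' (a * x)"
  by (metis scaleC_mult_right)
lemma sc_r: "\<exists>c'. scaleC c x * a = scaleC c' (x * a)"
  by (metis scaleC_mult_left)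
lemma sc_star: "\<exists>c'. cstar (scaleC c x) = scaleC c' (cstar x)"
  by (metis cstar_scaleC)



lemma proj_pp: "projection p \<Longrightarrow> p * p = p" "projection p \<Longrightarrow> p * (p * x) = p * x"
  by (simp_all add: projection_def mult.assoc[symmetric])

lemma proj_corner:
  assumes "projection p" "x \<in> corner p S"
  shows "p * x * p = x" "p * x = x" "x * p = x"
proof -
  from assms(2) obtain y where y: "x = p * y * p" by (auto simp: corner_def)
  have pp: "p * p = p" using assms(1) by (simp add: projection_def)
  show "p * x * p = x" "p * x = x" "x * p = x" unfolding y
    by (simp_all add: mult.assoc proj_pp assms(1))
qed

lemma corner_mono: "S \<subseteq> T \<Longrightarrow> corner p S \<subseteq> corner p T"
  by (auto simp: corner_def)

lemma corner_eq:
  assumes "cstar_subalg D" "p \<in> D" "projection p"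
  shows "corner p D = {x \<in> D. p * x * p = x}"
proof
  show "corner p D \<subseteq> {x \<in> D. p * x * p = x}"
  proof
    fix x assume x: "x \<in> corner p D"
    then obtain y where y: "x = p * y * p" "y \<in> D" by (auto simp: corner_def)
    have "x \<in> D" using y assms(1,2) unfolding cstar_subalg_def by simp
    then show "x \<in> {x \<in> D. p * x * p = x}" using proj_corner[OF assms(3) x] by simp
  qed
  show "{x \<in> D. p * x * p = x} \<subseteq> corner p D" unfolding corner_def by force
qed

lemma corner_subalg:
  assumes D: "cstar_subalg D" and p: "p \<in> D" and pr: "projection p"
  shows "cstar_subalg (corner p D)"
proof -
  have pp: "p * p = p" and ps: "cstar p = p" using pr by (auto simp: projection_def)
  have ce: "corner p D = {x \<in> D. p * x * p = x}" by (rule corner_eq[OF assms])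
  have cl: "closed {x \<in> D. p * x * p = x}"
  proof -
    have "closed {x. p * x * p = x}"
      by (intro closed_Collect_eq continuous_intros)
    moreover have "closed D" using D by (simp add: cstar_subalg_def)
    ultimately show ?thesis by (simp add: Collect_conj_eq closed_Int)
  qed
  have m: "(p*x*p) * (p*y*p) = p * (x * p * y) * p" for x y
    by (simp add: mult.assoc proj_pp pr)
  have mem: "x \<in> D \<Longrightarrow> y \<in> D \<Longrightarrow> x * y \<in> D" "x \<in> D \<Longrightarrow> y \<in> D \<Longrightarrow> x + y \<in> D"
    "x \<in> D \<Longrightarrow> scaleC c x \<in> D" "x \<in> D \<Longrightarrow> cstar x \<in> D" "0 \<in> D" for x y c
    using D by (auto simp: cstar_subalg_def)
  show ?thesis
    unfolding ce cstar_subalg_def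
  proof (intro conjI ballI allI)
    show "0 \<in> {x \<in> D. p * x * p = x}" using mem by simp
    show "closed {x \<in> D. p * x * p = x}" by (rule cl)
    fix x y c assume x: "x \<in> {x \<in> D. p * x * p = x}" and y: "y \<in> {x \<in> D. p * x * p = x}"
    then have xD: "x \<in> D" and yD: "y \<in> D" and ex: "p*x*p = x" and ey: "p*y*p = y" by auto
    show "x + y \<in> {x \<in> D. p * x * p = x}"
      using xD yD ex ey mem by (simp add: distrib_left distrib_right)
    have "x * y = p * (x * p * y) * p" using m[of x y] ex ey by simp
    moreover have "p * (p * (x * p * y) * p) * p = p * (x * p * y) * p" by (simp add: mult.assoc proj_pp pr)
    ultimately show "x * y \<in> {x \<in> D. p * x * p = x}" using xD yD mem p by simp
    show "scaleC c x \<in> {x \<in> D. p * x * p = x}"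
      using xD ex mem by (simp add: scaleC_mult_left scaleC_mult_right)
  next
    fix x assume x: "x \<in> {x \<in> D. p * x * p = x}"
    then have xD: "x \<in> D" and ex: "p*x*p = x" by auto
    have "cstar (p*x*p) = p * cstar x * p" by (simp add: cstar_mult ps mult.assoc)
    then show "cstar x \<in> {x \<in> D. p * x * p = x}" using xD ex mem by simp
  qed
qed


lemma sub_mem:
  assumes "cstar_subalg D"
  shows "x \<in> D \<Longrightarrow> y \<in> D \<Longrightarrow> x * y \<in> D" "x \<in> D \<Longrightarrow> y \<in> D \<Longrightarrow> x + y \<in> D"
    "x \<in> D \<Longrightarrow> scaleC c x \<in> D" "x \<in> D \<Longrightarrow> cstar x \<in> D" "0 \<in> D"
  using assms by (auto simp: cstar_subalg_def)

lemma ideal_gen: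
  assumes D: "cstar_subalg D" and J: "J \<subseteq> D"
  shows "closed_ideal (csub hull {d * j * e | d j e. d \<in> D \<and> j \<in> J \<and> e \<in> D}) D"
proof -
  let ?G = "{d * j * e | d j e. d \<in> D \<and> j \<in> J \<and> e \<in> D}"
  let ?I = "csub hull ?G"
  have cI: "csub ?I" by (rule csub_hull)
  have "?I \<subseteq> D"
  proof (rule hull_sub[OF csub_sub[OF D]], rule subsetI)
    fix y assume "y \<in> ?G"
    then obtain d j e where "y = d*j*e" "d \<in> D" "j \<in> J" "e \<in> D" by blast
    then show "y \<in> D" using J sub_mem(1)[OF D] by blast
  qed
  moreover have "a * x \<in> ?I" if a: "a \<in> D" and x: "x \<in> ?I" for a x
  proof (rule hull_pre[OF cI bounded_linear_mult_right sc_l _ x])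
    fix y assume "y \<in> ?G"
    then obtain d j e where "y = d*j*e" "d \<in> D" "j \<in> J" "e \<in> D" by blast
    then have "a * y = (a*d)*j*e" "a*d \<in> D" using a sub_mem(1)[OF D] by (simp_all add: mult.assoc)
    then show "a * y \<in> ?I" using \<open>j \<in> J\<close> \<open>e \<in> D\<close> by (intro hull_inc) blast
  qed
  moreover have "x * a \<in> ?I" if a: "a \<in> D" and x: "x \<in> ?I" for a x
  proof (rule hull_pre[OF cI bounded_linear_mult_left sc_r _ x])
    fix y assume "y \<in> ?G"
    then obtain d j e where "y = d*j*e" "d \<in> D" "j \<in> J" "e \<in> D" by blast
    then have "y * a = d*j*(e*a)" "e*a \<in> D" using a sub_mem(1)[OF D] by (simp_all add: mult.assoc)
    then show "y * a \<in> ?I" using \<open>j \<in> J\<close> \<open>d \<in> D\<close> by (intro hull_inc) blast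
  qed
  ultimately show ?thesis using cI unfolding closed_ideal_def csub_def by simp
qed

lemma corner_simple:
  assumes D: "cstar_subalg D" and one: "1 \<in> D" and p: "p \<in> D" and pr: "projection p"
    and p0: "p \<noteq> 0" and sD: "simple_cstar D"
  shows "simple_cstar (corner p D)"
proof -
  let ?C = "corner p D"
  have pp: "p * p = p" using pr by (simp add: projection_def)
  have pC: "p \<in> ?C" unfolding corner_def using one pp by force
  have ce: "?C = {x \<in> D. p * x * p = x}" by (rule corner_eq[OF D p pr])
  show ?thesis unfolding simple_cstar_def
  proof (intro conjI allI impI)
    show "?C \<noteq> {0}" using pC p0 by blast
    fix J assume J: "closed_ideal J ?C"
    have JC: "J \<subseteq> ?C" using J by (simp add: closed_ideal_def)
    have JD: "J \<subseteq> D" using JC ce by blast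
    let ?G = "{d * j * e | d j e. d \<in> D \<and> j \<in> J \<and> e \<in> D}"
    let ?I = "csub hull ?G"
    have I: "closed_ideal ?I D" by (rule ideal_gen[OF D JD])
    then have "?I = {0} \<or> ?I = D" using sD by (simp add: simple_cstar_def)
    then show "J = {0} \<or> J = ?C"
    proof
      assume I0: "?I = {0}"
      have "j = 0" if j: "j \<in> J" for j
      proof -
        have "1 * j * 1 \<in> ?G" using j one by blast
        then have "1 * j * 1 \<in> ?I" by (rule hull_inc)
        then show ?thesis using I0 by simp
      qed
      moreover have "0 \<in> J" using J by (simp add: closed_ideal_def)
      ultimately show ?thesis by blast
    next
      assume ID: "?I = D"
      have Jid: "d \<in> ?C \<Longrightarrow> x \<in> J \<Longrightarrow> d * x \<in> J \<and> x * d \<in> J" for d x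
        using J by (simp add: closed_ideal_def)
      have key: "p * x * p \<in> J" if x: "x \<in> ?I" for x
      proof (rule hull_pre[OF csub_ideal[OF J] bl_lr sc_lr _ x])
        fix y assume "y \<in> ?G"
        then obtain d j e where y: "y = d*j*e" "d \<in> D" "j \<in> J" "e \<in> D" by blast
        obtain k where k: "j = p * k * p" using y(3) JC by (auto simp: corner_def)
        have eq: "p * y * p = (p*d*p) * j * (p*e*p)"
          unfolding y(1) k by (simp add: mult.assoc proj_pp pr)
        have "p*d*p \<in> ?C" "p*e*p \<in> ?C" using y by (auto simp: corner_def)
        then have "(p*d*p) * j \<in> J" using Jid y(3) by simp
        then show "p * y * p \<in> J" unfolding eq using Jid \<open>p*e*p \<in> ?C\<close> by simp
      qed
      have "p * p * p \<in> J" using key p ID by simp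
      then have pJ: "p \<in> J" using pp by simp
      have "y \<in> J" if y: "y \<in> ?C" for y
        using Jid[OF y pJ] proj_corner(3)[OF pr y] by simp
      then show ?thesis using JC by blast
    qed
  qed
qed



lemma construct:
  assumes A: "cstar_subalg A" and B: "cstar_subalg B" and one: "1 \<in> B" and BA: "B \<subseteq> A"
    and p: "p \<in> B" and pr: "projection p"
    and Cin: "C \<in> intermediate (corner p B) (corner p A)"
  shows "csub hull (B \<union> {b * c * b' | b c b'. b \<in> B \<and> c \<in> C \<and> b' \<in> B}) \<in> intermediate B A
    \<and> corner p (csub hull (B \<union> {b * c * b' | b c b'. b \<in> B \<and> c \<in> C \<and> b' \<in> B})) = C"
proof -
  let ?G = "{b * c * b' | b c b'. b \<in> B \<and> c \<in> C \<and> b' \<in> B}"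
  let ?D = "csub hull (B \<union> ?G)"
  have C: "cstar_subalg C" and pBC: "corner p B \<subseteq> C" and CpA: "C \<subseteq> corner p A"
    using Cin by (auto simp: intermediate_def)
  have pA: "p \<in> A" using p BA by blast
  have CA: "C \<subseteq> A" using CpA corner_eq[OF A pA pr] by blast
  have cD: "csub ?D" by (rule csub_hull)
  have GD: "B \<union> ?G \<subseteq> ?D" by (rule hull_subset)
  have cform: "\<exists>k. c = p * k * p" if "c \<in> C" for c
    using that CpA by (auto simp: corner_def)
  have pbp: "p * b * p \<in> C" if "b \<in> B" for b
    using that pBC by (auto simp: corner_def)
  have gg: "g * g' \<in> B \<union> ?G" if g: "g \<in> B \<union> ?G" and g': "g' \<in> B \<union> ?G" for g g'
  proof -
    { assume "g \<in> B" "g' \<in> B"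
      then have ?thesis using sub_mem(1)[OF B] by simp }
    moreover
    { fix b2 c2 b2' assume "g \<in> B" "g' = b2 * c2 * b2'" "b2 \<in> B" "c2 \<in> C" "b2' \<in> B"
      then have "g * g' = (g * b2) * c2 * b2'" "g * b2 \<in> B" using sub_mem(1)[OF B] by (simp_all add: mult.assoc)
      then have ?thesis using \<open>c2 \<in> C\<close> \<open>b2' \<in> B\<close> by blast }
    moreover
    { fix b1 c1 b1' assume "g' \<in> B" "g = b1 * c1 * b1'" "b1 \<in> B" "c1 \<in> C" "b1' \<in> B"
      then have "g * g' = b1 * c1 * (b1' * g')" "b1' * g' \<in> B" using sub_mem(1)[OF B] by (simp_all add: mult.assoc)
      then have ?thesis using \<open>c1 \<in> C\<close> \<open>b1 \<in> B\<close> by blast }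
    moreover
    { fix b1 c1 b1' b2 c2 b2' assume "g = b1 * c1 * b1'" "b1 \<in> B" "c1 \<in> C" "b1' \<in> B"
        "g' = b2 * c2 * b2'" "b2 \<in> B" "c2 \<in> C" "b2' \<in> B"
      obtain k1 where k1: "c1 = p * k1 * p" using cform \<open>c1 \<in> C\<close> by blast
      obtain k2 where k2: "c2 = p * k2 * p" using cform \<open>c2 \<in> C\<close> by blast
      have eq: "g * g' = b1 * (c1 * (p * (b1' * b2) * p) * c2) * b2'"
        unfolding \<open>g = _\<close> \<open>g' = _\<close> k1 k2 by (simp add: mult.assoc proj_pp pr)
      have "b1' * b2 \<in> B" using sub_mem(1)[OF B] \<open>b1' \<in> B\<close> \<open>b2 \<in> B\<close> by simp
      then have "p * (b1' * b2) * p \<in> C" by (rule pbp)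
      then have "c1 * (p * (b1' * b2) * p) * c2 \<in> C" using sub_mem(1)[OF C] \<open>c1 \<in> C\<close> \<open>c2 \<in> C\<close> by simp
      then have ?thesis unfolding eq using \<open>b1 \<in> B\<close> \<open>b2' \<in> B\<close> by blast }
    ultimately show ?thesis using g g' by blast
  qed
  have m1: "g * y \<in> ?D" if g: "g \<in> B \<union> ?G" and y: "y \<in> ?D" for g y
  proof (rule hull_pre[OF cD bounded_linear_mult_right sc_l _ y])
    fix z assume "z \<in> B \<union> ?G"
    then show "g * z \<in> ?D" using gg[OF g] GD by blast
  qed
  have mult: "x * y \<in> ?D" if x: "x \<in> ?D" and y: "y \<in> ?D" for x y
  proof (rule hull_pre[OF cD bounded_linear_mult_left sc_r _ x])
    fix z assume "z \<in> B \<union> ?G"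
    then show "z * y \<in> ?D" using m1 y by blast
  qed
  have star: "cstar x \<in> ?D" if x: "x \<in> ?D" for x
  proof (rule hull_pre[OF cD bl_cstar sc_star _ x])
    fix z assume z: "z \<in> B \<union> ?G"
    have "cstar z \<in> B \<union> ?G"
    proof (cases "z \<in> B")
      case True then show ?thesis using sub_mem(4)[OF B] by simp
    next
      case False
      then obtain b c b' where "z = b * c * b'" "b \<in> B" "c \<in> C" "b' \<in> B" using z by blast
      then have "cstar z = cstar b' * cstar c * cstar b" "cstar b' \<in> B" "cstar c \<in> C" "cstar b \<in> B"
        using sub_mem(4)[OF B] sub_mem(4)[OF C] by (simp_all add: cstar_mult mult.assoc)
      then show ?thesis by blast
    qed
    then show "cstar z \<in> ?D" using GD by blast
  qed
  have subD: "cstar_subalg ?D" using cD mult star unfolding csub_def cstar_subalg_def by simp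
  have DA: "?D \<subseteq> A"
  proof (rule hull_sub[OF csub_sub[OF A]], rule subsetI)
    fix z assume z: "z \<in> B \<union> ?G"
    show "z \<in> A"
    proof (cases "z \<in> B")
      case True then show ?thesis using BA by blast
    next
      case False
      then obtain b c b' where "z = b * c * b'" "b \<in> A" "c \<in> A" "b' \<in> A" using z BA CA by blast
      then show ?thesis using sub_mem(1)[OF A] by simp
    qed
  qed
  have BD: "B \<subseteq> ?D" using GD by blast
  have c1: "corner p ?D \<subseteq> C"
  proof
    fix x assume "x \<in> corner p ?D"
    then obtain y where x: "x = p * y * p" and y: "y \<in> ?D" by (auto simp: corner_def)
    have "p * y * p \<in> C"
    proof (rule hull_pre[OF csub_sub[OF C] bl_lr sc_lr _ y])
      fix z assume z: "z \<in> B \<union> ?G"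
      show "p * z * p \<in> C"
      proof (cases "z \<in> B")
        case True then show ?thesis by (rule pbp)
      next
        case False
        then obtain b c b' where zz: "z = b * c * b'" "b \<in> B" "c \<in> C" "b' \<in> B" using z by blast
        obtain k where k: "c = p * k * p" using cform zz(3) by blast
        have eq: "p * z * p = (p * b * p) * c * (p * b' * p)"
          unfolding zz(1) k by (simp add: mult.assoc proj_pp pr)
        show ?thesis unfolding eq using sub_mem(1)[OF C] pbp zz by simp
      qed
    qed
    then show "x \<in> C" using x by simp
  qed
  have c2: "C \<subseteq> corner p ?D"
  proof
    fix c assume c: "c \<in> C"
    have "1 * c * 1 \<in> ?G" using c one by blast
    then have "c \<in> ?G" by simp
    then have cD': "c \<in> ?D" using GD by blast
    have "p * c * p = c" using proj_corner(1)[OF pr] c CpA by blast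
    then show "c \<in> corner p ?D" using cD' unfolding corner_def by force
  qed
  show ?thesis using subD BD DA c1 c2 unfolding intermediate_def by blast
qed



lemma unit_gen:
  assumes B: "cstar_subalg B" and one: "1 \<in> B" and p: "p \<in> B" and full: "full_in p B"
  shows "1 \<in> csub hull {d * j * e | d j e. d \<in> B \<and> j \<in> {p} \<and> e \<in> B}"
proof -
  let ?I = "csub hull {d * j * e | d j e. d \<in> B \<and> j \<in> {p} \<and> e \<in> B}"
  have I: "closed_ideal ?I B" by (rule ideal_gen[OF B]) (use p in simp)
  have "1 * p * 1 \<in> {d * j * e | d j e. d \<in> B \<and> j \<in> {p} \<and> e \<in> B}" using one by blast
  then have "p \<in> ?I" by (simp add: hull_inc)
  then have "?I = B" using full I unfolding full_in_def by blast
  then show ?thesis using one by simp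
qed

lemma reconstruct:
  assumes B: "cstar_subalg B" and one: "1 \<in> B" and p: "p \<in> B" and pr: "projection p"
    and full: "full_in p B" and Din: "D \<in> intermediate B A"
  shows "D = csub hull {b * c * b' | b c b'. b \<in> B \<and> c \<in> corner p D \<and> b' \<in> B}"
proof -
  let ?H = "csub hull {b * c * b' | b c b'. b \<in> B \<and> c \<in> corner p D \<and> b' \<in> B}"
  let ?I0 = "csub hull {d * j * e | d j e. d \<in> B \<and> j \<in> {p} \<and> e \<in> B}"
  have D: "cstar_subalg D" and BD: "B \<subseteq> D" using Din by (auto simp: intermediate_def)
  have pD: "p \<in> D" using p BD by blast
  have cH: "csub ?H" by (rule csub_hull)
  have "?H \<subseteq> D"
  proof (rule hull_sub[OF csub_sub[OF D]], rule subsetI)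
    fix y assume "y \<in> {b * c * b' | b c b'. b \<in> B \<and> c \<in> corner p D \<and> b' \<in> B}"
    then obtain b c b' where y: "y = b * c * b'" "b \<in> B" "c \<in> corner p D" "b' \<in> B" by blast
    have "c \<in> D" using y(3) corner_eq[OF D pD pr] by blast
    then show "y \<in> D" using y BD sub_mem(1)[OF D] by (simp add: subset_iff)
  qed
  moreover have "D \<subseteq> ?H"
  proof
    fix d assume d: "d \<in> D"
    have step1: "g * d * y \<in> ?H" if g: "g \<in> {d * j * e | d j e. d \<in> B \<and> j \<in> {p} \<and> e \<in> B}"
      and y: "y \<in> ?I0" for g y
    proof (rule hull_pre[OF cH bounded_linear_mult_right sc_l _ y])
      fix z assume z: "z \<in> {d * j * e | d j e. d \<in> B \<and> j \<in> {p} \<and> e \<in> B}"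
      obtain b b' where g': "g = b * p * b'" "b \<in> B" "b' \<in> B" using g by blast
      obtain b2 b2' where z': "z = b2 * p * b2'" "b2 \<in> B" "b2' \<in> B" using z by blast
      have eq: "g * d * z = b * (p * (b' * d * b2) * p) * b2'"
        unfolding g'(1) z'(1) by (simp add: mult.assoc)
      have "b' * d * b2 \<in> D" using sub_mem(1)[OF D] d g'(3) z'(2) BD by (simp add: subset_iff)
      then have "p * (b' * d * b2) * p \<in> corner p D" by (auto simp: corner_def)
      then have "g * d * z \<in> {b * c * b' | b c b'. b \<in> B \<and> c \<in> corner p D \<and> b' \<in> B}"
        unfolding eq using g'(2) z'(3) by blast
      then show "g * d * z \<in> ?H" by (rule hull_inc)
    qed
    have step2: "x * (d * y) \<in> ?H" if x: "x \<in> ?I0" and y: "y \<in> ?I0" for x y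
    proof (rule hull_pre[OF cH bounded_linear_mult_left sc_r _ x])
      fix z assume z: "z \<in> {d * j * e | d j e. d \<in> B \<and> j \<in> {p} \<and> e \<in> B}"
      show "z * (d * y) \<in> ?H" using step1[OF z y] by (simp add: mult.assoc)
    qed
    have u: "1 \<in> ?I0" by (rule unit_gen[OF B one p full])
    show "d \<in> ?H" using step2[OF u u] by simp
  qed
  ultimately show ?thesis by blast
qed

lemma part2_simple:
  assumes A: "cstar_subalg A" and B: "cstar_subalg B" and one: "1 \<in> B" and BA: "B \<subseteq> A"
    and p: "p \<in> B" and pr: "projection p" and full: "full_in p B"
    and irr: "cstar_irreducible (corner p B) (corner p A)"
    and Din: "D \<in> intermediate B A"
  shows "simple_cstar D"
proof -
  have D: "cstar_subalg D" and BD: "B \<subseteq> D" and DA: "D \<subseteq> A" using Din by (auto simp: intermediate_def)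
  have pD: "p \<in> D" using p BD by blast
  have oneD: "1 \<in> D" using one BD by blast
  have pp: "p * p = p" and ps: "cstar p = p" using pr by (auto simp: projection_def)
  have cDin: "corner p D \<in> intermediate (corner p B) (corner p A)"
    using corner_subalg[OF D pD pr] corner_mono[OF BD] corner_mono[OF DA]
    by (simp add: intermediate_def)
  then have sC: "simple_cstar (corner p D)" using irr by (simp add: cstar_irreducible_def)
  have ce: "corner p D = {x \<in> D. p * x * p = x}" by (rule corner_eq[OF D pD pr])
  show ?thesis unfolding simple_cstar_def
  proof (intro conjI allI impI)
    show "D \<noteq> {0}" using oneD by auto
    fix J assume J: "closed_ideal J D"
    have JD: "J \<subseteq> D" and J0: "0 \<in> J" and Jadd: "\<And>x y. x \<in> J \<Longrightarrow> y \<in> J \<Longrightarrow> x + y \<in> J"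
      and Jsc: "\<And>c x. x \<in> J \<Longrightarrow> scaleC c x \<in> J"
      and Jid: "\<And>d x. d \<in> D \<Longrightarrow> x \<in> J \<Longrightarrow> d * x \<in> J \<and> x * d \<in> J"
      and Jcl: "closed J"
      using J unfolding closed_ideal_def by auto
    have pjp: "p * x * p \<in> J" if "x \<in> J" for x using Jid[OF pD that] Jid[OF pD, of "p * x"] by blast
    let ?K = "corner p J"
    have Keq: "?K = {x \<in> J. p * x * p = x}"
    proof
      show "?K \<subseteq> {x \<in> J. p * x * p = x}"
      proof
        fix x assume x: "x \<in> ?K"
        then obtain y where "x = p * y * p" "y \<in> J" by (auto simp: corner_def)
        then show "x \<in> {x \<in> J. p * x * p = x}" using pjp proj_corner(1)[OF pr x] by simp
      qed
      show "{x \<in> J. p * x * p = x} \<subseteq> ?K" unfolding corner_def by force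
    qed
    have Ksub: "?K \<subseteq> corner p D" using JD by (rule corner_mono)
    have K0': "0 \<in> ?K" using J0 Keq by simp
    have Kcl: "closed ?K" unfolding Keq
    proof -
      have "closed {x. p * x * p = x}" by (intro closed_Collect_eq continuous_intros)
      then show "closed {x \<in> J. p * x * p = x}" using Jcl by (simp add: Collect_conj_eq closed_Int)
    qed
    have Kadd: "x + y \<in> ?K" if x: "x \<in> ?K" and y: "y \<in> ?K" for x y
    proof -
      have xJ: "x \<in> J" and ex: "p * x * p = x" using x Keq by auto
      have yJ: "y \<in> J" and ey: "p * y * p = y" using y Keq by auto
      show ?thesis unfolding Keq using Jadd[OF xJ yJ] ex ey by (simp add: distrib_left distrib_right)
    qed
    have Ksc: "scaleC c x \<in> ?K" if x: "x \<in> ?K" for x c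
    proof -
      have xJ: "x \<in> J" and ex: "p * x * p = x" using x Keq by auto
      show ?thesis unfolding Keq using Jsc[OF xJ] ex by (simp add: scaleC_mult_left scaleC_mult_right)
    qed
    have Kid: "d * x \<in> ?K \<and> x * d \<in> ?K" if d: "d \<in> corner p D" and x: "x \<in> ?K" for d x
    proof -
      have xJ: "x \<in> J" and ex: "p * x * p = x" using x Keq by auto
      have dD: "d \<in> D" and ed: "p * d * p = d" using d ce by auto
      have e1: "p * (d * x) * p = d * x"
      proof -
        have "p * (d * x) * p = p * ((p*d*p) * (p*x*p)) * p" using ed ex by simp
        also have "... = (p*d*p) * (p*x*p)" by (simp add: mult.assoc proj_pp pr)
        finally show ?thesis using ed ex by simp
      qed
      have e2: "p * (x * d) * p = x * d"
      proof -
        have "p * (x * d) * p = p * ((p*x*p) * (p*d*p)) * p" using ed ex by simp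
        also have "... = (p*x*p) * (p*d*p)" by (simp add: mult.assoc proj_pp pr)
        finally show ?thesis using ed ex by simp
      qed
      show ?thesis unfolding Keq using Jid[OF dD xJ] e1 e2 by simp
    qed
    have K: "closed_ideal ?K (corner p D)"
      unfolding closed_ideal_def using Ksub K0' Kcl Kadd Ksc Kid by blast
    then have "?K = {0} \<or> ?K = corner p D" using sC by (simp add: simple_cstar_def)
    then show "J = {0} \<or> J = D"
    proof
      assume K0: "?K = {0}"
      have xp: "x * p = 0" if x: "x \<in> J" for x
      proof -
        have "cstar x * x \<in> J" using Jid[OF sub_mem(4)[OF D] x] JD x by blast
        then have "p * (cstar x * x) * p \<in> ?K" unfolding corner_def by blast
        then have "p * (cstar x * x) * p = 0" using K0 by simp
        moreover have "cstar (x * p) * (x * p) = p * (cstar x * x) * p"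
          by (simp add: cstar_mult ps mult.assoc)
        ultimately have "(norm (x * p))^2 = 0" using cstar_identity[of "x * p"] by simp
        then show ?thesis by simp
      qed
      have "x = 0" if x: "x \<in> J" for x
      proof -
        let ?G = "{d * j * e | d j e. d \<in> B \<and> j \<in> {p} \<and> e \<in> B}"
        have "x * z \<in> {0}" if z: "z \<in> csub hull ?G" for z
        proof (rule hull_pre[OF csub_zero bounded_linear_mult_right sc_l _ z])
          fix g assume "g \<in> ?G"
          then obtain b b' where g: "g = b * p * b'" "b \<in> B" "b' \<in> B" by blast
          have "x * b \<in> J" using Jid[of b x] g(2) BD x by blast
          then have "x * b * p = 0" by (rule xp)
          then show "x * g \<in> {0}" unfolding g(1) by (simp add: mult.assoc[symmetric])
        qed
        from this[OF unit_gen[OF B one p full]] show ?thesis by simp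
      qed
      then show ?thesis using J0 by blast
    next
      assume KC: "?K = corner p D"
      have "p * 1 * p \<in> corner p D" using oneD unfolding corner_def by blast
      then have "p \<in> ?K" using KC pp by simp
      then have pJ: "p \<in> J" using Keq by blast
      have "csub hull {d * j * e | d j e. d \<in> B \<and> j \<in> {p} \<and> e \<in> B} \<subseteq> J"
      proof (rule hull_sub[OF csub_ideal[OF J]], rule subsetI)
        fix g assume "g \<in> {d * j * e | d j e. d \<in> B \<and> j \<in> {p} \<and> e \<in> B}"
        then obtain b b' where g: "g = b * p * b'" "b \<in> B" "b' \<in> B" by blast
        have "b * p \<in> J" using Jid[of b p] g(2) BD pJ by blast
        then show "g \<in> J" using Jid[of b' "b * p"] g BD by blast
      qed
      then have "1 \<in> J" using unit_gen[OF B one p full] by blast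
      then have "d \<in> J" if "d \<in> D" for d using Jid[OF that] by force
      then show ?thesis using JD by blast
    qed
  qed
qed


theorem lemma3p2:
  fixes A B :: "'a::cstar_algebra set" and p :: 'a
  assumes "cstar_subalg A" and "1 \<in> A"
    and "cstar_subalg B" and "1 \<in> B" and "B \<subseteq> A"
    and "p \<in> B" and "projection p"
  shows "(cstar_irreducible B A \<and> p \<noteq> 0 \<longrightarrow> cstar_irreducible (corner p B) (corner p A))
    \<and> (full_in p B \<and> cstar_irreducible (corner p B) (corner p A) \<longrightarrow>
        cstar_irreducible B A \<and>
        bij_betw (corner p) (intermediate B A) (intermediate (corner p B) (corner p A)))"
proof (intro conjI impI)
  note A = assms(1) and B = assms(3) and one = assms(4) and BA = assms(5) and p = assms(6) and pr = assms(7)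
  have img: "corner p D \<in> intermediate (corner p B) (corner p A)" if Din: "D \<in> intermediate B A" for D
  proof -
    have D: "cstar_subalg D" and BD: "B \<subseteq> D" and DA: "D \<subseteq> A" using Din by (auto simp: intermediate_def)
    have pD: "p \<in> D" using p BD by blast
    show ?thesis using corner_subalg[OF D pD pr] corner_mono[OF BD] corner_mono[OF DA]
      by (simp add: intermediate_def)
  qed
  {
    assume H: "cstar_irreducible B A \<and> p \<noteq> 0"
    show "cstar_irreducible (corner p B) (corner p A)"
      unfolding cstar_irreducible_def
    proof
      fix C assume Cin: "C \<in> intermediate (corner p B) (corner p A)"
      let ?D = "csub hull (B \<union> {b * c * b' | b c b'. b \<in> B \<and> c \<in> C \<and> b' \<in> B})"
      have c: "?D \<in> intermediate B A" "corner p ?D = C" using construct[OF A B one BA p pr Cin] by auto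
      have D: "cstar_subalg ?D" and BD: "B \<subseteq> ?D" using c(1) by (auto simp: intermediate_def)
      have sD: "simple_cstar ?D" using H c(1) by (simp add: cstar_irreducible_def)
      have "simple_cstar (corner p ?D)"
        by (rule corner_simple[OF D _ _ pr _ sD]) (use BD one p H in auto)
      then show "simple_cstar C" using c(2) by simp
    qed
  }
  {
    assume H: "full_in p B \<and> cstar_irreducible (corner p B) (corner p A)"
    have full: "full_in p B" and irr: "cstar_irreducible (corner p B) (corner p A)" using H by auto
    show "cstar_irreducible B A" unfolding cstar_irreducible_def
      using part2_simple[OF A B one BA p pr full irr] by (rule ballI)
    show "bij_betw (corner p) (intermediate B A) (intermediate (corner p B) (corner p A))"
      unfolding bij_betw_def
    proof
      show "inj_on (corner p) (intermediate B A)"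
      proof (rule inj_onI)
        fix D1 D2 assume D1: "D1 \<in> intermediate B A" and D2: "D2 \<in> intermediate B A"
          and eq: "corner p D1 = corner p D2"
        show "D1 = D2"
        proof -
          have "D1 = csub hull {b * c * b' | b c b'. b \<in> B \<and> c \<in> corner p D1 \<and> b' \<in> B}"
            by (rule reconstruct[OF B one p pr full D1])
          also have "... = csub hull {b * c * b' | b c b'. b \<in> B \<and> c \<in> corner p D2 \<and> b' \<in> B}"
            by (simp only: eq)
          also have "... = D2" by (rule reconstruct[OF B one p pr full D2, symmetric])
          finally show ?thesis .
        qed
      qed
      show "corner p ` intermediate B A = intermediate (corner p B) (corner p A)"
      proof
        show "corner p ` intermediate B A \<subseteq> intermediate (corner p B) (corner p A)" using img by blast
        show "intermediate (corner p B) (corner p A) \<subseteq> corner p ` intermediate B A"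
        proof
          fix C assume Cin: "C \<in> intermediate (corner p B) (corner p A)"
          let ?D = "csub hull (B \<union> {b * c * b' | b c b'. b \<in> B \<and> c \<in> C \<and> b' \<in> B})"
          have c: "?D \<in> intermediate B A" "corner p ?D = C" using construct[OF A B one BA p pr Cin] by auto
          show "C \<in> corner p ` intermediate B A" using image_eqI[where f="corner p", OF c(2)[symmetric] c(1)] .
        qed
      qed
    qed
  }
qed

end
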